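(* Let $G$ be a simple graph with canonical mixed graph $F$ and let $X,Y$ be as defined in the context. Let $u,v\in X$ be distinct vertices with $uv\notin E(G)$. Then $cM_2(G+uv)\ge cM_2(G)$. Moreover, if $cM_2(G+uv)=cM_2(G)$, then $d_G(u)=d_G(v)$, $d^+_F(u)=d^-_F(u)$ and $d^+_F(v)=d^-_F(v)$.
   Context: All graphs are finite and simple; $d_G(u)$ is the degree of $u$ and $cM_2(G)=\sum_{uv\in E(G)}|d_G(u)^2-d_G(v)^2|$. $G+uv$ denotes $G$ with the edge $uv$ added. The canonical mixed graph $F$ of $G$ has vertex set $V(G)$; for each edge $uv\in E(G)$: if $d_G(u)>d_G(v)$ then $F$ contains the arc $\overrightarrow{uv}$, and if $d_G(u)=d_G(v)$ then $F$ contains the undirected edge $uv$. $d^+_F(u)$ (resp. $d^-_F(u)$) is the number of arcs of $F$ with tail (resp. head) $u$. $X=\{u\in V(G): d^+_F(u)\ge d^-_F(u)\}$ and $Y=\{u\in V(G): d^+_F(u)< d^-_F(u)\}$. *)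

theory Defs
  imports Main
begin

definition simple_graph :: "'a set \<Rightarrow> 'a set set \<Rightarrow> bool" where
  "simple_graph V E \<longleftrightarrow> finite V \<and> (\<forall>e\<in>E. e \<subseteq> V \<and> card e = 2)"

definition degree :: "'a set set \<Rightarrow> 'a \<Rightarrow> nat" where
  "degree E u = card {e\<in>E. u \<in> e}"

text \<open>cM2(G) = sum over edges uv of |d(u)^2 - d(v)^2|.  Each edge {u,v} is
  counted via both ordered pairs (u,v),(v,u), hence the division by 2 (exact).\<close>
definition cM2 :: "'a set \<Rightarrow> 'a set set \<Rightarrow> int" where
  "cM2 V E = (\<Sum>p\<in>{(u,v). u \<in> V \<and> v \<in> V \<and> {u,v} \<in> E}.
      \<bar>int (degree E (fst p))^2 - int (degree E (snd p))^2\<bar>) div 2"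

text \<open>Canonical mixed graph F: an edge uv with d(u) > d(v) becomes the arc u\<rightarrow>v,
  edges between vertices of equal degree stay undirected.\<close>
definition arcs :: "'a set \<Rightarrow> 'a set set \<Rightarrow> ('a \<times> 'a) set" where
  "arcs V E = {(u,v). u \<in> V \<and> v \<in> V \<and> {u,v} \<in> E \<and> degree E u > degree E v}"

definition undirected_edges :: "'a set \<Rightarrow> 'a set set \<Rightarrow> 'a set set" where
  "undirected_edges V E = {e\<in>E. \<exists>u v. e = {u,v} \<and> degree E u = degree E v}"

definition outdeg :: "'a set \<Rightarrow> 'a set set \<Rightarrow> 'a \<Rightarrow> nat" where
  "outdeg V E u = card {a\<in>arcs V E. fst a = u}"

definition indeg :: "'a set \<Rightarrow> 'a set set \<Rightarrow> 'a \<Rightarrow> nat" where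
  "indeg V E u = card {a\<in>arcs V E. snd a = u}"

definition Xset :: "'a set \<Rightarrow> 'a set set \<Rightarrow> 'a set" where
  "Xset V E = {u\<in>V. outdeg V E u \<ge> indeg V E u}"

definition Yset :: "'a set \<Rightarrow> 'a set set \<Rightarrow> 'a set" where
  "Yset V E = {u\<in>V. outdeg V E u < indeg V E u}"

definition add_edge :: "'a set set \<Rightarrow> 'a \<Rightarrow> 'a \<Rightarrow> 'a set set" where
  "add_edge E u v = insert {u,v} E"

end

theory Submission
  imports Defs
begin

lemma finE: "simple_graph V E \<Longrightarrow> finite E"
  unfolding simple_graph_def by (meson PowI finite_Pow_iff finite_subset subsetI)

lemma deg_add:
  assumes "simple_graph V E" "{u,v} \<notin> E"
  shows "degree (add_edge E u v) x = degree E x + (if x = u \<or> x = v then 1 else 0)"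
proof (cases "x = u \<or> x = v")
  case True
  then have "{e\<in>add_edge E u v. x \<in> e} = insert {u,v} {e\<in>E. x\<in>e}"
    unfolding add_edge_def by auto
  moreover have "finite {e\<in>E. x\<in>e}" using finE[OF assms(1)] by simp
  ultimately show ?thesis using True assms(2) unfolding degree_def by simp
next
  case False
  then have "{e\<in>add_edge E u v. x \<in> e} = {e\<in>E. x\<in>e}"
    unfolding add_edge_def by auto
  then show ?thesis using False unfolding degree_def by simp
qed

lemma delta_val:
  fixes a b :: int
  assumes "0 \<le> a" "0 \<le> b"
  shows "\<bar>(a+1)^2 - b^2\<bar> - \<bar>a^2 - b^2\<bar> = (if b \<le> a then 2*a+1 else -(2*a+1))"
proof (cases "b \<le> a")
  case True
  then have "b^2 \<le> a^2" "b^2 \<le> (a+1)^2" using assms by (simp_all add: power_mono)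
  then show ?thesis using True by (simp add: power2_eq_square algebra_simps)
next
  case False
  then have "a^2 \<le> b^2" "(a+1)^2 \<le> b^2" using assms by (simp_all add: power_mono)
  then show ?thesis using False by (simp add: power2_eq_square algebra_simps)
qed

lemma vertex_part:
  assumes sg: "simple_graph V E" and uv: "{u,v} \<notin> E" "u \<noteq> v" and x: "x = u \<or> x = v"
  defines "N \<equiv> {w\<in>V. {x,w} \<in> E}"
  defines "d \<equiv> \<lambda>w. int (degree E w)"
  defines "d' \<equiv> \<lambda>w. int (degree (add_edge E u v) w)"
  shows "(\<Sum>w\<in>N. \<bar>(d' x)^2 - (d' w)^2\<bar> - \<bar>(d x)^2 - (d w)^2\<bar>)
     = (2 * d x + 1) * (int (card {w\<in>N. d w \<le> d x}) - int (card {w\<in>N. \<not> d w \<le> d x}))"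
proof -
  have finN: "finite N" using sg unfolding simple_graph_def N_def by simp
  have nx: "w \<in> N \<Longrightarrow> w \<noteq> u \<and> w \<noteq> v" for w
  proof -
    assume w: "w \<in> N"
    then have "{x,w} \<in> E" unfolding N_def by simp
    then have c: "card {x,w} = 2" using sg unfolding simple_graph_def by blast
    then have "w \<noteq> x" by (cases "w = x") auto
    moreover have "{x,w} \<noteq> {u,v}" using \<open>{x,w} \<in> E\<close> uv by auto
    ultimately show ?thesis using x by (auto simp: insert_commute)
  qed
  have "(\<Sum>w\<in>N. \<bar>(d' x)^2 - (d' w)^2\<bar> - \<bar>(d x)^2 - (d w)^2\<bar>)
      = (\<Sum>w\<in>N. if d w \<le> d x then 2 * d x + 1 else -(2 * d x + 1))"
  proof (rule sum.cong[OF refl])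
    fix w assume "w \<in> N"
    then have "d' w = d w" "d' x = d x + 1" using nx x deg_add[OF sg uv(1)]
      unfolding d_def d'_def by auto
    then show "\<bar>(d' x)^2 - (d' w)^2\<bar> - \<bar>(d x)^2 - (d w)^2\<bar>
        = (if d w \<le> d x then 2 * d x + 1 else -(2 * d x + 1))"
      using delta_val[of "d x" "d w"] unfolding d_def by simp
  qed
  also have "\<dots> = (2 * d x + 1) * int (card {w\<in>N. d w \<le> d x}) - (2 * d x + 1) * int (card {w\<in>N. \<not> d w \<le> d x})"
    using finN by (simp add: sum.If_cases Int_def algebra_simps)
  finally show ?thesis by (simp add: algebra_simps)
qed


definition PP :: "'a set \<Rightarrow> 'a set set \<Rightarrow> ('a \<times> 'a) set" where
  "PP V E = {(a,b). a \<in> V \<and> b \<in> V \<and> {a,b} \<in> E}"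

definition ff :: "'a set set \<Rightarrow> 'a \<times> 'a \<Rightarrow> int" where
  "ff E p = \<bar>int (degree E (fst p))^2 - int (degree E (snd p))^2\<bar>"

lemma cM2_PP: "cM2 V E = (\<Sum>p\<in>PP V E. ff E p) div 2"
  unfolding cM2_def PP_def ff_def by simp

lemma sum_star:
  assumes sg: "simple_graph V E" and uv: "{u,v} \<notin> E" "u \<noteq> v" "u \<in> V" "v \<in> V"
  defines "E' \<equiv> add_edge E u v"
  defines "\<delta> \<equiv> \<lambda>p. ff E' p - ff E p"
  defines "A \<equiv> \<lambda>x. (\<lambda>w. (x,w)) ` {w\<in>V. {x,w} \<in> E}"
  defines "B \<equiv> \<lambda>x. (\<lambda>w. (w,x)) ` {w\<in>V. {x,w} \<in> E}"
  shows "(\<Sum>p\<in>PP V E'. ff E' p) = (\<Sum>p\<in>PP V E. ff E p) + 2 * ff E' (u,v)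
     + 2 * (\<Sum>w\<in>{w\<in>V. {u,w} \<in> E}. \<delta> (u,w)) + 2 * (\<Sum>w\<in>{w\<in>V. {v,w} \<in> E}. \<delta> (v,w))"
proof -
  have finV: "finite V" using sg unfolding simple_graph_def by simp
  have finP: "finite (PP V E)"
    by (rule finite_subset[of _ "V \<times> V"]) (auto simp: PP_def finV)
  have noloop: "{a} \<notin> E" for a using sg unfolding simple_graph_def by fastforce
  have P': "PP V E' = insert (u,v) (insert (v,u) (PP V E))"
    using uv unfolding PP_def E'_def add_edge_def by (auto simp: insert_commute)
  have nin: "(u,v) \<notin> PP V E" "(v,u) \<notin> PP V E" "(u,v) \<noteq> (v,u)"
    using uv by (auto simp: PP_def insert_commute)
  have sym': "ff E' (v,u) = ff E' (u,v)" unfolding ff_def by (simp add: abs_minus_commute)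
  have "(\<Sum>p\<in>PP V E'. ff E' p) = 2 * ff E' (u,v) + (\<Sum>p\<in>PP V E. ff E' p)"
    using P' nin finP sym' by simp
  also have "(\<Sum>p\<in>PP V E. ff E' p) = (\<Sum>p\<in>PP V E. ff E p) + (\<Sum>p\<in>PP V E. \<delta> p)"
    unfolding \<delta>_def by (simp add: sum_subtractf)
  also have "(\<Sum>p\<in>PP V E. \<delta> p) = (\<Sum>p\<in>A u \<union> B u \<union> A v \<union> B v. \<delta> p)"
  proof (rule sum.mono_neutral_right[OF finP])
    show "A u \<union> B u \<union> A v \<union> B v \<subseteq> PP V E"
      using uv unfolding A_def B_def PP_def by (auto simp: insert_commute)
    show "\<forall>p\<in>PP V E - (A u \<union> B u \<union> A v \<union> B v). \<delta> p = 0"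
    proof
      fix p assume p: "p \<in> PP V E - (A u \<union> B u \<union> A v \<union> B v)"
      obtain a b where ab: "p = (a,b)" by (cases p)
      have "a \<noteq> u \<and> a \<noteq> v \<and> b \<noteq> u \<and> b \<noteq> v"
        using p uv unfolding ab A_def B_def PP_def by (auto simp: insert_commute image_iff)
      then show "\<delta> p = 0" unfolding \<delta>_def ff_def ab E'_def using deg_add[OF sg uv(1)] by simp
    qed
  qed
  also have "\<dots> = (\<Sum>p\<in>A u. \<delta> p) + (\<Sum>p\<in>B u. \<delta> p) + (\<Sum>p\<in>A v. \<delta> p) + (\<Sum>p\<in>B v. \<delta> p)"
  proof -
    have fA: "finite (A x)" "finite (B x)" for x unfolding A_def B_def using finV by auto
    have d1: "A u \<inter> B u = {}" "A v \<inter> B v = {}" using noloop unfolding A_def B_def by auto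
    have d2: "(A u \<union> B u) \<inter> A v = {}" "(A u \<union> B u \<union> A v) \<inter> B v = {}"
      using uv noloop unfolding A_def B_def by (auto simp: insert_commute)
    show ?thesis using fA d1 d2 by (simp add: sum.union_disjoint)
  qed
  moreover have hA: "(\<Sum>p\<in>A x. \<delta> p) = (\<Sum>w\<in>{w\<in>V. {x,w} \<in> E}. \<delta> (x,w))" for x
    unfolding A_def by (subst sum.reindex) (auto simp: inj_on_def)
  moreover have hB: "(\<Sum>p\<in>B x. \<delta> p) = (\<Sum>w\<in>{w\<in>V. {x,w} \<in> E}. \<delta> (x,w))" for x
    unfolding B_def by (subst sum.reindex) (auto simp: inj_on_def \<delta>_def ff_def abs_minus_commute)
  ultimately show ?thesis by simp
qed


lemma outdeg_eq:
  assumes "x \<in> V"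
  shows "outdeg V E x = card {w\<in>{w\<in>V. {x,w} \<in> E}. degree E w < degree E x}"
proof -
  have "{a\<in>arcs V E. fst a = x} = (\<lambda>w. (x,w)) ` {w\<in>{w\<in>V. {x,w} \<in> E}. degree E w < degree E x}"
    using assms unfolding arcs_def by auto
  then show ?thesis unfolding outdeg_def by (simp add: card_image inj_on_def)
qed

lemma indeg_eq:
  assumes "x \<in> V"
  shows "indeg V E x = card {w\<in>{w\<in>V. {x,w} \<in> E}. \<not> degree E w \<le> degree E x}"
proof -
  have "{a\<in>arcs V E. snd a = x} = (\<lambda>w. (w,x)) ` {w\<in>{w\<in>V. {x,w} \<in> E}. \<not> degree E w \<le> degree E x}"
    using assms unfolding arcs_def by (auto simp: insert_commute)
  then show ?thesis unfolding indeg_def by (simp add: card_image inj_on_def)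
qed

lemma vertex_bounds:
  assumes sg: "simple_graph V E" and x: "x \<in> Xset V E"
  defines "N \<equiv> {w\<in>V. {x,w} \<in> E}"
  shows "card {w\<in>N. \<not> degree E w \<le> degree E x} \<le> card {w\<in>N. degree E w \<le> degree E x}"
    and "card {w\<in>N. \<not> degree E w \<le> degree E x} = card {w\<in>N. degree E w \<le> degree E x}
         \<Longrightarrow> outdeg V E x = indeg V E x"
proof -
  have xV: "x \<in> V" using x unfolding Xset_def by simp
  have finN: "finite N" using sg unfolding simple_graph_def N_def by simp
  have le: "outdeg V E x \<le> card {w\<in>N. degree E w \<le> degree E x}"
    unfolding outdeg_eq[OF xV] N_def[symmetric] using finN by (intro card_mono) auto
  have io: "indeg V E x \<le> outdeg V E x" using x unfolding Xset_def by simp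
  show "card {w\<in>N. \<not> degree E w \<le> degree E x} \<le> card {w\<in>N. degree E w \<le> degree E x}"
    using le io indeg_eq[OF xV] unfolding N_def by simp
  show "card {w\<in>N. \<not> degree E w \<le> degree E x} = card {w\<in>N. degree E w \<le> degree E x}
         \<Longrightarrow> outdeg V E x = indeg V E x"
    using le io indeg_eq[OF xV] unfolding N_def by simp
qed

theorem mainTheorem3:
  fixes V :: "'a set" and E :: "'a set set" and u v :: 'a
  assumes "simple_graph V E"
    and "u \<in> Xset V E" and "v \<in> Xset V E" and "u \<noteq> v"
    and "{u,v} \<notin> E"
  shows "cM2 V (add_edge E u v) \<ge> cM2 V E \<and>
         (cM2 V (add_edge E u v) = cM2 V E \<longrightarrow>
           degree E u = degree E v \<and> outdeg V E u = indeg V E u \<and> outdeg V E v = indeg V E v)"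
proof -
  note sg = assms(1)
  have uV: "u \<in> V" and vV: "v \<in> V" using assms(2,3) unfolding Xset_def by auto
  define E' where "E' = add_edge E u v"
  define d where "d = (\<lambda>w. int (degree E w))"
  define L where "L = (\<lambda>x. int (card {w\<in>{w\<in>V. {x,w} \<in> E}. degree E w \<le> degree E x}))"
  define H where "H = (\<lambda>x. int (card {w\<in>{w\<in>V. {x,w} \<in> E}. \<not> degree E w \<le> degree E x}))"
  have vp: "(\<Sum>w\<in>{w\<in>V. {x,w} \<in> E}. ff E' (x,w) - ff E (x,w)) = (2 * d x + 1) * (L x - H x)"
    if "x = u \<or> x = v" for x
    using vertex_part[OF sg assms(5) assms(4) that] unfolding ff_def E'_def d_def L_def H_def
    by simp
  have S: "(\<Sum>p\<in>PP V E'. ff E' p) = (\<Sum>p\<in>PP V E. ff E p) + 2 * (ff E' (u,v)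
     + (2 * d u + 1) * (L u - H u) + (2 * d v + 1) * (L v - H v))"
    using sum_star[OF sg assms(5) assms(4) uV vV] vp[of u] vp[of v] unfolding E'_def by simp
  define K where "K = ff E' (u,v) + (2 * d u + 1) * (L u - H u) + (2 * d v + 1) * (L v - H v)"
  have Lu: "H u \<le> L u" and Lv: "H v \<le> L v"
    using vertex_bounds(1)[OF sg assms(2)] vertex_bounds(1)[OF sg assms(3)] unfolding L_def H_def by auto
  have f0: "ff E' (u,v) \<ge> 0" unfolding ff_def by simp
  have du: "d u \<ge> 0" "d v \<ge> 0" unfolding d_def by auto
  have t1: "(2 * d u + 1) * (L u - H u) \<ge> 0" "(2 * d v + 1) * (L v - H v) \<ge> 0"
    using Lu Lv du by auto
  have K0: "K \<ge> 0" unfolding K_def using f0 t1 by linarith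
  have C: "cM2 V E' = cM2 V E + K"
    unfolding cM2_PP S K_def[symmetric] by simp
  show ?thesis
  proof (intro conjI impI)
    show "cM2 V E \<le> cM2 V (add_edge E u v)" using C K0 unfolding E'_def by simp
  next
    assume "cM2 V (add_edge E u v) = cM2 V E"
    then have "K = 0" using C unfolding E'_def by simp
    then have z: "ff E' (u,v) = 0" "(2 * d u + 1) * (L u - H u) = 0" "(2 * d v + 1) * (L v - H v) = 0"
      using f0 t1 unfolding K_def by linarith+
    have "L u = H u" "L v = H v" using z(2,3) du by auto
    then show "outdeg V E u = indeg V E u" "outdeg V E v = indeg V E v"
      using vertex_bounds(2)[OF sg assms(2)] vertex_bounds(2)[OF sg assms(3)] unfolding L_def H_def by auto
    have "int (degree E' u)^2 = int (degree E' v)^2" using z(1) unfolding ff_def by simp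
    then have "degree E' u = degree E' v"
      by (metis of_nat_eq_iff of_nat_power power2_eq_iff_nonneg of_nat_0_le_iff)
    then show "degree E u = degree E v" using deg_add[OF sg assms(5)] unfolding E'_def by simp
  qed
qed

end
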